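(* Let $\lambda>\frac16$. Then $\mu_\lambda$ is doubling: there exists $C_\lambda\ge1$ such that for every $x\in[0,1]$ and every $r>0$, $\mu_\lambda(B(x,2r))\le C_\lambda\,\mu_\lambda(B(x,r))$.
   Context: For $\lambda>\frac16$, $\gamma_\lambda$ is the unique real number $\ge1$ with $2\cdot3^{-\gamma_\lambda}+(6\lambda+1)6^{-\gamma_\lambda}+(6\lambda-1)6^{-\gamma_\lambda}=1$; $p_0=p_3=3^{-\gamma_\lambda}$, $p_1=(6\lambda+1)6^{-\gamma_\lambda}$, $p_2=(6\lambda-1)6^{-\gamma_\lambda}$; $S_0(x)=x/3$, $S_1(x)=x/6+1/3$, $S_2(x)=-x/6+2/3$, $S_3(x)=x/3+2/3$; $\mu_\lambda$ is the unique Borel probability measure on $[0,1]$ with $\mu_\lambda=\sum_{i=0}^3p_i\,\mu_\lambda\circ S_i^{-1}$. $B(x,r)$ is the open ball (interval) of center $x$ and radius $r$. *)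

theory Defs
  imports "HOL-Probability.Probability"
begin

definition gamma_lam :: "real \<Rightarrow> real" where
  "gamma_lam lam = (THE g. g \<ge> 1 \<and>
     2 * 3 powr (-g) + (6*lam+1) * 6 powr (-g) + (6*lam-1) * 6 powr (-g) = 1)"

definition pw :: "real \<Rightarrow> nat \<Rightarrow> real" where
  "pw lam i = (if i = 0 \<or> i = 3 then 3 powr (- gamma_lam lam)
               else if i = 1 then (6*lam+1) * 6 powr (- gamma_lam lam)
               else (6*lam-1) * 6 powr (- gamma_lam lam))"

definition Smap :: "nat \<Rightarrow> real \<Rightarrow> real" where
  "Smap i x = (if i = 0 then x/3
               else if i = 1 then x/6 + 1/3
               else if i = 2 then - x/6 + 2/3
               else x/3 + 2/3)"

definition is_mu_lambda :: "real \<Rightarrow> real measure \<Rightarrow> bool" where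
  "is_mu_lambda lam M \<longleftrightarrow>
     sets M = sets borel \<and> prob_space M \<and> emeasure M (- {0..1}) = 0 \<and>
     (\<forall>A\<in>sets borel. emeasure M A =
        (\<Sum>i<4. ennreal (pw lam i) * emeasure M (Smap i -` A)))"

end

theory Submission
  imports Defs
begin

lemma scale_induct:
  fixes P :: "real \<Rightarrow> bool" and a :: real
  assumes a: "a > 0" and base: "\<And>t. t \<ge> a \<Longrightarrow> P t"
    and step: "\<And>t. 0 < t \<Longrightarrow> t < a \<Longrightarrow> (\<And>s. s \<ge> 3*t \<Longrightarrow> P s) \<Longrightarrow> P t"
    and t: "t > 0"
  shows "P t"
proof -
  have A: "\<forall>s::real. a / 3^n \<le> s \<longrightarrow> P s" for n
  proof (induction n)
    case 0 then show ?case using base by simp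
  next
    case (Suc n)
    show ?case
    proof (intro allI impI)
      fix s assume s: "s \<ge> a / 3^Suc n"
      have pos: "a / 3^Suc n > 0" using a by simp
      show "P s"
      proof (cases "s \<ge> a")
        case True then show ?thesis using base by simp
      next
        case False
        have "a / 3^n \<le> 3 * s" using s by (simp add: field_simps)
        then have IH: "P u" if "u \<ge> 3 * s" for u using Suc.IH that by auto
        have "0 < s" using pos s by linarith
        then show ?thesis using False IH step by auto
      qed
    qed
  qed
  obtain n where "(1/3::real)^n < t / a" using real_arch_pow_inv[of "t/a" "1/3"] a t by auto
  then have "a / 3^n \<le> t" using a by (simp add: field_simps power_divide)
  then show ?thesis using A by blast
qed

locale mu_setup =
  fixes lam :: real and M :: "real measure"
  assumes lam_gt: "lam > 1/6" and mu: "is_mu_lambda lam M"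
begin

lemma sets_M: "sets M = sets borel" using mu unfolding is_mu_lambda_def by auto

sublocale prob_space M using mu unfolding is_mu_lambda_def by auto

lemma space_M: "space M = UNIV" using sets_eq_imp_space_eq[OF sets_M] by simp

lemma inM[simp]: "A \<in> sets M \<longleftrightarrow> A \<in> sets borel" using sets_M by simp

lemma Smap_meas: "Smap i \<in> borel_measurable borel"
  by (rule borel_measurable_continuous_onI)
     (cases "i=0"; cases "i=1"; cases "i=2"; auto simp: Smap_def intro!: continuous_intros)

lemma pre_borel[simp]: "A \<in> sets borel \<Longrightarrow> Smap i -` A \<in> sets borel"
  by (rule measurable_sets_borel[OF Smap_meas]) simp

abbreviation p where "p \<equiv> pw lam"
abbreviation mu where "mu A \<equiv> measure M A"

lemma p_pos: "p i > 0"
  using lam_gt by (auto simp: pw_def)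

lemma p3: "p 3 = p 0" by (simp add: pw_def)

lemma eq_real:
  assumes "A \<in> sets borel"
  shows "mu A = (\<Sum>i<4. p i * mu (Smap i -` A))"
proof -
  have "emeasure M A = (\<Sum>i<4. ennreal (p i) * emeasure M (Smap i -` A))"
    using mu assms unfolding is_mu_lambda_def by auto
  also have "\<dots> = (\<Sum>i<4. ennreal (p i * mu (Smap i -` A)))"
    using p_pos by (intro sum.cong) (auto simp: emeasure_eq_measure ennreal_mult less_imp_le)
  also have "\<dots> = ennreal (\<Sum>i<4. p i * mu (Smap i -` A))"
    using p_pos by (intro sum_ennreal) (auto intro!: mult_nonneg_nonneg less_imp_le[OF p_pos])
  finally have "ennreal (mu A) = ennreal (\<Sum>i<4. p i * mu (Smap i -` A))"
    by (simp add: emeasure_eq_measure)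
  moreover have nn: "0 \<le> (\<Sum>i<4. p i * mu (Smap i -` A))"
    by (intro sum_nonneg mult_nonneg_nonneg less_imp_le[OF p_pos]) auto
  ultimately show ?thesis using ennreal_inj[OF measure_nonneg nn] by simp
qed

lemma mu_univ: "mu UNIV = 1" using prob_space space_M by simp

lemma mu_le1: "mu A \<le> 1"
  using bounded_measure[of A] prob_space by simp

lemma mu_out: "mu (- {0..1}) = 0"
proof -
  have "emeasure M (- {0..1}) = 0" using mu unfolding is_mu_lambda_def by auto
  then show ?thesis by (simp add: emeasure_eq_measure)
qed

lemma mu_restrict:
  assumes "A \<in> sets borel" shows "mu A = mu (A \<inter> {0..1})"
proof -
  have e: "A = (A \<inter> {0..1}) \<union> (A - {0..1})" by auto
  have "mu A \<le> mu (A \<inter> {0..1}) + mu (A - {0..1})"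
    using measure_Un_le[of "A \<inter> {0..1}" M "A - {0..1}"] assms
    by (subst e) auto
  moreover have "mu (A - {0..1}) \<le> mu (- {0..1})"
    by (rule finite_measure_mono) auto
  moreover have "mu (A \<inter> {0..1}) \<le> mu A"
    using assms by (intro finite_measure_mono) auto
  ultimately show ?thesis using mu_out by simp
qed

lemma mu01: "mu {0..1} = 1"
  using mu_restrict[of UNIV] mu_univ by simp

lemma sum_p: "(\<Sum>i<4. p i) = 1"
proof -
  have "\<And>i. mu (Smap i -` {0..1}) = 1"
  proof -
    fix i
    have "{0..1} \<subseteq> Smap i -` {0..1::real}" by (auto simp: Smap_def)
    then have "mu {0..1} \<le> mu (Smap i -` {0..1})" by (intro finite_measure_mono) auto
    then show "mu (Smap i -` {0..1}) = 1" using mu01 mu_le1[of "Smap i -` {0..1}"] by simp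
  qed
  then show ?thesis using eq_real[of "{0..1}"] mu01 by simp
qed

lemma p0_lt1: "p 0 < 1"
  using sum_p p_pos[of 1] p_pos[of 2] p_pos[of 3] by (simp add: numeral_eq_Suc lessThan_Suc)

lemma p_le1: "p i \<le> 1"
proof -
  have le: "p k \<le> (\<Sum>i<4. p i)" if "k < 4" for k
    using that p_pos by (intro member_le_sum) (auto intro: less_imp_le)
  show ?thesis
  proof (cases "i < 4")
    case True then show ?thesis using le sum_p by metis
  next
    case False
    then have "p i = p 2" by (simp add: pw_def)
    then show ?thesis using le[of 2] sum_p by simp
  qed
qed

lemma mu_zero_out: "B \<in> sets borel \<Longrightarrow> B \<inter> {0..1} = {} \<Longrightarrow> mu B = 0"
  using mu_restrict[of B] by simp

lemma mu_0: "mu {0} = 0"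
proof -
  have "mu (Smap j -` {0}) = 0" if "j \<noteq> 0" for j
    using that by (intro mu_zero_out) (auto simp: Smap_def split: if_splits)
  moreover have "Smap 0 -` {0} = {0}" by (auto simp: Smap_def)
  ultimately have "mu {0} = p 0 * mu {0}"
    using eq_real[of "{0}"] by (simp add: numeral_eq_Suc lessThan_Suc)
  then have "(1 - p 0) * mu {0} = 0" by (simp add: algebra_simps)
  then show ?thesis using p0_lt1 by simp
qed

lemma mu_1: "mu {1} = 0"
proof -
  have "mu (Smap j -` {1}) = 0" if "j \<noteq> 3" "j < 4" for j
    using that by (intro mu_zero_out) (auto simp: Smap_def split: if_splits)
  moreover have "Smap 3 -` {1} = {1}" by (auto simp: Smap_def)
  ultimately have "mu {1} = p 0 * mu {1}"
    using eq_real[of "{1}"] p3 by (simp add: numeral_eq_Suc lessThan_Suc)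
  then have "(1 - p 0) * mu {1} = 0" by (simp add: algebra_simps)
  then show ?thesis using p0_lt1 by simp
qed

lemma mu_01: "mu {0,1} = 0"
proof -
  have "mu ({0} \<union> {1}) \<le> mu {0} + mu {1}" by (rule measure_Un_le) auto
  moreover have "{0,1} = {0} \<union> {1::real}" by auto
  ultimately have "mu {0,1} \<le> 0" using mu_0 mu_1 by simp
  then show ?thesis using measure_nonneg[of M "{0,1}"] by linarith
qed

definition I :: "nat \<Rightarrow> real set" where
  "I i = (if i=0 then {0..1/3} else if i=1 then {1/3..1/2} else if i=2 then {1/2..2/3} else {2/3..1})"

lemma sep: "j \<noteq> i \<Longrightarrow> i < 4 \<Longrightarrow> j < 4 \<Longrightarrow> 0 \<le> y \<Longrightarrow> y \<le> 1 \<Longrightarrow> Smap j y \<in> I i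
   \<Longrightarrow> y = 0 \<or> y = 1"
  by (auto simp: Smap_def I_def split: if_splits)

lemma Smap01: "0 \<le> y \<Longrightarrow> y \<le> 1 \<Longrightarrow> Smap i y \<in> {0..1}"
  by (auto simp: Smap_def)

lemma KEY:
  assumes A: "A \<in> sets borel" and sub: "A \<inter> {0..1} \<subseteq> I i" and i: "i < 4"
  shows "mu A = p i * mu (Smap i -` A)"
proof -
  define A' where "A' = A \<inter> {0..1}"
  have A'b: "A' \<in> sets borel" using A by (simp add: A'_def)
  have "mu A = mu A'" using mu_restrict[OF A] by (simp add: A'_def)
  also have "\<dots> = (\<Sum>j<4. p j * mu (Smap j -` A'))" using eq_real[OF A'b] .
  also have "\<dots> = (\<Sum>j<4. if j = i then p i * mu (Smap i -` A) else 0)"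
  proof (intro sum.cong refl)
    fix j assume j: "j \<in> {..<4::nat}"
    show "p j * mu (Smap j -` A') = (if j = i then p i * mu (Smap i -` A) else 0)"
    proof (cases "j = i")
      case True
      have "mu (Smap i -` A') = mu (Smap i -` A' \<inter> {0..1})"
        using A'b by (intro mu_restrict) simp
      also have "Smap i -` A' \<inter> {0..1} = Smap i -` A \<inter> {0..1}"
        using Smap01[of _ i] by (auto simp: A'_def)
      also have "mu \<dots> = mu (Smap i -` A)"
        using A by (intro mu_restrict[symmetric]) simp
      finally show ?thesis using True by simp
    next
      case False
      have "mu (Smap j -` A') = mu (Smap j -` A' \<inter> {0..1})"
        using A'b by (intro mu_restrict) simp
      also have "\<dots> \<le> mu {0,1}"
      proof (rule finite_measure_mono)
        show "Smap j -` A' \<inter> {0..1} \<subseteq> {0, 1}"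
        proof
          fix y assume y: "y \<in> Smap j -` A' \<inter> {0..1}"
          then have "Smap j y \<in> I i" using sub by (auto simp: A'_def)
          then show "y \<in> {0, 1}" using sep[OF False i, of y] j y by auto
        qed
      qed simp
      finally have "mu (Smap j -` A') = 0" using mu_01 measure_nonneg[of M] by (simp add: order_antisym)
      then show ?thesis using False by simp
    qed
  qed
  also have "\<dots> = p i * mu (Smap i -` A)" using i by simp
  finally show ?thesis .
qed

lemma pre_oo:
  "Smap 0 -` {a<..<b} = {3*a<..<3*b}"
  "Smap 1 -` {a<..<b} = {6*a-2<..<6*b-2}"
  "Smap 2 -` {a<..<b} = {4-6*b<..<4-6*a}"
  "Smap 3 -` {a<..<b} = {3*a-2<..<3*b-2}"
  by (auto simp: Smap_def field_simps)

lemma pre_cc: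
  "Smap 0 -` {a..b} = {3*a..3*b}"
  "Smap 1 -` {a..b} = {6*a-2..6*b-2}"
  "Smap 2 -` {a..b} = {4-6*b..4-6*a}"
  "Smap 3 -` {a..b} = {3*a-2..3*b-2}"
  by (auto simp: Smap_def field_simps)

definition G where "G t = mu {0..t}"
definition H where "H t = mu {1-t..1}"

lemma G_mono: "s \<le> t \<Longrightarrow> G s \<le> G t"
  unfolding G_def by (intro finite_measure_mono) auto

lemma H_mono: "s \<le> t \<Longrightarrow> H s \<le> H t"
  unfolding H_def by (intro finite_measure_mono) auto

lemma G_le1: "G t \<le> 1" unfolding G_def by (rule mu_le1)
lemma H_le1: "H t \<le> 1" unfolding H_def by (rule mu_le1)
lemma G1: "G 1 = 1" unfolding G_def using mu01 by simp
lemma H1: "H 1 = 1" unfolding H_def using mu01 by simp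

lemma G_scale: "0 \<le> t \<Longrightarrow> t \<le> 1 \<Longrightarrow> G (t/3) = p 0 * G t"
  unfolding G_def by (subst KEY[of _ 0]) (auto simp: I_def pre_cc)

lemma H_scale: "0 \<le> t \<Longrightarrow> t \<le> 1 \<Longrightarrow> H (t/3) = p 0 * H t"
  unfolding H_def by (subst KEY[of _ 3]) (auto simp: I_def pre_cc p3)

lemma G_third: "G (1/3) = p 0" using G_scale[of 1] G1 by simp
lemma H_third: "H (1/3) = p 0" using H_scale[of 1] H1 by simp

lemma G3: assumes "0 \<le> t" shows "p 0 * G (3*t) \<le> G t"
proof (cases "t \<le> 1/3")
  case True then show ?thesis using G_scale[of "3*t"] assms by simp
next
  case False
  then have "G (1/3) \<le> G t" by (intro G_mono) simp
  then show ?thesis using G_third G_le1[of "3*t"] p_pos[of 0]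
    by (smt (verit) mult_left_le mult_le_cancel_left1)
qed

lemma H3: assumes "0 \<le> t" shows "p 0 * H (3*t) \<le> H t"
proof (cases "t \<le> 1/3")
  case True then show ?thesis using H_scale[of "3*t"] assms by simp
next
  case False
  then have "H (1/3) \<le> H t" by (intro H_mono) simp
  then show ?thesis using H_third H_le1[of "3*t"] p_pos[of 0]
    by (smt (verit) mult_left_le mult_le_cancel_left1)
qed

lemma GH: assumes "t > 0" shows "p 0 * G t \<le> H t \<and> p 0 * H t \<le> G t"
proof (rule scale_induct[of "1/3", OF _ _ _ assms])
  fix t :: real assume "t \<ge> 1/3"
  then have "G (1/3) \<le> G t" "H (1/3) \<le> H t" by (auto intro: G_mono H_mono)
  then show "p 0 * G t \<le> H t \<and> p 0 * H t \<le> G t"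
    using G_third H_third G_le1[of t] H_le1[of t] p_pos[of 0]
    by (smt (verit) mult_left_le)
next
  fix t :: real assume t: "0 < t" "t < 1/3" and IH: "\<And>s. s \<ge> 3*t \<Longrightarrow> p 0 * G s \<le> H s \<and> p 0 * H s \<le> G s"
  have "G t = p 0 * G (3*t)" "H t = p 0 * H (3*t)" using G_scale[of "3*t"] H_scale[of "3*t"] t by auto
  then show "p 0 * G t \<le> H t \<and> p 0 * H t \<le> G t"
    using IH[of "3*t"] p_pos[of 0] by (simp add: mult_left_mono)
qed simp

lemma G_pos: assumes "t > 0" shows "G t > 0"
proof (rule scale_induct[of "1/3", OF _ _ _ assms])
  fix t :: real assume "t \<ge> 1/3"
  then have "G (1/3) \<le> G t" by (auto intro: G_mono)
  then show "G t > 0" using G_third p_pos[of 0] by simp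
next
  fix t :: real assume t: "0 < t" "t < 1/3" and IH: "\<And>s. s \<ge> 3*t \<Longrightarrow> G s > 0"
  have "G t = p 0 * G (3*t)" using G_scale[of "3*t"] t by auto
  then show "G t > 0" using IH[of "3*t"] p_pos[of 0] by simp
qed simp

lemma H_pos: assumes "t > 0" shows "H t > 0"
  using GH[OF assms] G_pos[OF assms] p_pos[of 0]
  by (smt (verit) mult_pos_pos)

lemma G27: assumes "0 \<le> t" "s \<le> 27*t" shows "p 0^3 * G s \<le> G t"
proof -
  have "p 0 * G (27*t) \<le> G (9*t)" using G3[of "9*t"] assms by simp
  moreover have "p 0 * G (9*t) \<le> G (3*t)" using G3[of "3*t"] assms by simp
  moreover have "p 0 * G (3*t) \<le> G t" using G3[of t] assms by simp
  moreover have "G s \<le> G (27*t)" using assms by (intro G_mono) simp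
  ultimately have "p 0 * (p 0 * (p 0 * G s)) \<le> G t"
    using p_pos[of 0] by (smt (verit) mult_left_mono)
  then show ?thesis by (simp add: power3_eq_cube mult.assoc)
qed

lemma H27: assumes "0 < t" "s \<le> 27*t" shows "p 0^4 * H s \<le> G t"
proof -
  have "p 0 * H (27*t) \<le> H (9*t)" using H3[of "9*t"] assms by simp
  moreover have "p 0 * H (9*t) \<le> H (3*t)" using H3[of "3*t"] assms by simp
  moreover have "p 0 * H (3*t) \<le> H t" using H3[of t] assms by simp
  moreover have "H s \<le> H (27*t)" using assms by (intro H_mono) simp
  moreover have "p 0 * H t \<le> G t" using GH assms by auto
  ultimately have "p 0 * (p 0 * (p 0 * (p 0 * H s))) \<le> G t"
    using p_pos[of 0] by (smt (verit) mult_left_mono)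
  then show ?thesis by (simp add: power4_eq_xxxx mult.assoc)
qed

lemma J13: "0 \<le> u \<Longrightarrow> u \<le> 1/6 \<Longrightarrow> mu {1/3..1/3+u} = p 1 * G (6*u)"
proof -
  assume u: "0 \<le> u" "u \<le> 1/6"
  have e: "Smap 1 -` {1/3..1/3+u} = {0..6*u}" by (auto simp: Smap_def field_simps)
  have "mu ({1/3..1/3+u}) = p 1 * mu (Smap 1 -` ({1/3..1/3+u}))" using u by (intro KEY) (auto simp: I_def)
  then show ?thesis by (simp only: e G_def)
qed

lemma J12: "0 \<le> u \<Longrightarrow> u \<le> 1/6 \<Longrightarrow> mu {1/2..1/2+u} = p 2 * H (6*u)"
proof -
  assume u: "0 \<le> u" "u \<le> 1/6"
  have e: "Smap 2 -` {1/2..1/2+u} = {1-6*u..1}" by (auto simp: Smap_def field_simps)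
  have "mu ({1/2..1/2+u}) = p 2 * mu (Smap 2 -` ({1/2..1/2+u}))" using u by (intro KEY) (auto simp: I_def)
  then show ?thesis by (simp only: e H_def)
qed

lemma J23: "0 \<le> u \<Longrightarrow> u \<le> 1/3 \<Longrightarrow> mu {2/3..2/3+u} = p 0 * G (3*u)"
proof -
  assume u: "0 \<le> u" "u \<le> 1/3"
  have e: "Smap 3 -` {2/3..2/3+u} = {0..3*u}" by (auto simp: Smap_def field_simps)
  have "mu ({2/3..2/3+u}) = p 3 * mu (Smap 3 -` ({2/3..2/3+u}))" using u by (intro KEY) (auto simp: I_def)
  then show ?thesis by (simp only: e G_def p3)
qed

lemma L13: "0 \<le> u \<Longrightarrow> u \<le> 1/3 \<Longrightarrow> mu {1/3-u..1/3} = p 0 * H (3*u)"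
proof -
  assume u: "0 \<le> u" "u \<le> 1/3"
  have e: "Smap 0 -` {1/3-u..1/3} = {1-3*u..1}" by (auto simp: Smap_def field_simps)
  have "mu ({1/3-u..1/3}) = p 0 * mu (Smap 0 -` ({1/3-u..1/3}))" using u by (intro KEY) (auto simp: I_def)
  then show ?thesis by (simp only: e H_def)
qed

lemma L12: "0 \<le> u \<Longrightarrow> u \<le> 1/6 \<Longrightarrow> mu {1/2-u..1/2} = p 1 * H (6*u)"
proof -
  assume u: "0 \<le> u" "u \<le> 1/6"
  have e: "Smap 1 -` {1/2-u..1/2} = {1-6*u..1}" by (auto simp: Smap_def field_simps)
  have "mu ({1/2-u..1/2}) = p 1 * mu (Smap 1 -` ({1/2-u..1/2}))" using u by (intro KEY) (auto simp: I_def)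
  then show ?thesis by (simp only: e H_def)
qed

lemma L23: "0 \<le> u \<Longrightarrow> u \<le> 1/6 \<Longrightarrow> mu {2/3-u..2/3} = p 2 * G (6*u)"
proof -
  assume u: "0 \<le> u" "u \<le> 1/6"
  have e: "Smap 2 -` {2/3-u..2/3} = {0..6*u}" by (auto simp: Smap_def field_simps)
  have "mu ({2/3-u..2/3}) = p 2 * mu (Smap 2 -` ({2/3-u..2/3}))" using u by (intro KEY) (auto simp: I_def)
  then show ?thesis by (simp only: e G_def)
qed

lemma POS_aux:
  assumes "l > 0"
  shows "\<forall>a b. 0 \<le> a \<longrightarrow> b \<le> 1 \<longrightarrow> b - a = l \<longrightarrow> 0 < mu {a<..<b}"
proof (rule scale_induct[of 2, OF _ _ _ assms])
  fix l :: real assume l: "0 < l" "l < 2"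
    and IH: "\<And>s. s \<ge> 3*l \<Longrightarrow> \<forall>a b. 0 \<le> a \<longrightarrow> b \<le> 1 \<longrightarrow> b - a = s \<longrightarrow> 0 < mu {a<..<b}"
  show "\<forall>a b. 0 \<le> a \<longrightarrow> b \<le> 1 \<longrightarrow> b - a = l \<longrightarrow> 0 < mu {a<..<b}"
  proof (intro allI impI)
    fix a b :: real assume ab: "0 \<le> a" "b \<le> 1" "b - a = l"
    have IH': "0 < mu {a'<..<b'}" if "0 \<le> a'" "b' \<le> 1" "b' - a' \<ge> 3*l" for a' b'
      using IH[of "b' - a'"] that by auto
    show "0 < mu {a<..<b}"
    proof (cases "a < 1/3 \<and> 1/3 < b")
      case True
      define u where "u = min (b - 1/3) (1/6) / 2"
      have u: "0 < u" "u \<le> 1/6" "1/3 + u < b" using True unfolding u_def min_def by (auto simp: field_simps)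
      have "0 < p 1 * G (6*u)" using p_pos[of 1] G_pos[of "6*u"] u by simp
      also have "\<dots> = mu {1/3..1/3+u}" using J13 u by simp
      also have "\<dots> \<le> mu {a<..<b}" using u True by (intro finite_measure_mono) auto
      finally show ?thesis .
    next
      case F1: False
      show ?thesis
      proof (cases "a < 1/2 \<and> 1/2 < b")
        case True
        define u where "u = min (b - 1/2) (1/6) / 2"
        have u: "0 < u" "u \<le> 1/6" "1/2 + u < b" using True unfolding u_def min_def by (auto simp: field_simps)
        have "0 < p 2 * H (6*u)" using p_pos[of 2] H_pos[of "6*u"] u by simp
        also have "\<dots> = mu {1/2..1/2+u}" using J12 u by simp
        also have "\<dots> \<le> mu {a<..<b}" using u True by (intro finite_measure_mono) auto
        finally show ?thesis .
      next
        case F2: False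
        show ?thesis
        proof (cases "a < 2/3 \<and> 2/3 < b")
          case True
          define u where "u = min (b - 2/3) (1/3) / 2"
          have u: "0 < u" "u \<le> 1/3" "2/3 + u < b" using True unfolding u_def min_def by (auto simp: field_simps)
          have "0 < p 0 * G (3*u)" using p_pos[of 0] G_pos[of "3*u"] u by simp
          also have "\<dots> = mu {2/3..2/3+u}" using J23 u by simp
          also have "\<dots> \<le> mu {a<..<b}" using u True by (intro finite_measure_mono) auto
          finally show ?thesis .
        next
          case F3: False
          have cases: "b \<le> 1/3 \<or> (1/3 \<le> a \<and> b \<le> 1/2) \<or> (1/2 \<le> a \<and> b \<le> 2/3) \<or> 2/3 \<le> a"
            using F1 F2 F3 ab l by linarith
          then show ?thesis
          proof (elim disjE conjE)
            assume h: "b \<le> 1/3"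
            have "mu {a<..<b} = p 0 * mu (Smap 0 -` {a<..<b})"
              using h ab by (intro KEY) (auto simp: I_def)
            then have "mu {a<..<b} = p 0 * mu {3*a<..<3*b}" by (simp only: pre_oo)
            moreover have "0 < mu {3*a<..<3*b}" using IH' ab h by auto
            ultimately show ?thesis using p_pos[of 0] by simp
          next
            assume h: "1/3 \<le> a" "b \<le> 1/2"
            have "mu {a<..<b} = p 1 * mu (Smap 1 -` {a<..<b})"
              using h ab by (intro KEY) (auto simp: I_def)
            then have "mu {a<..<b} = p 1 * mu {6*a-2<..<6*b-2}" by (simp only: pre_oo)
            moreover have "0 < mu {6*a-2<..<6*b-2}" using IH' ab h l by auto
            ultimately show ?thesis using p_pos[of 1] by simp
          next
            assume h: "1/2 \<le> a" "b \<le> 2/3"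
            have "mu {a<..<b} = p 2 * mu (Smap 2 -` {a<..<b})"
              using h ab by (intro KEY) (auto simp: I_def)
            then have "mu {a<..<b} = p 2 * mu {4-6*b<..<4-6*a}" by (simp only: pre_oo)
            moreover have "0 < mu {4-6*b<..<4-6*a}" using IH' ab h l by auto
            ultimately show ?thesis using p_pos[of 2] by simp
          next
            assume h: "2/3 \<le> a"
            have "mu {a<..<b} = p 3 * mu (Smap 3 -` {a<..<b})"
              using h ab by (intro KEY) (auto simp: I_def)
            then have "mu {a<..<b} = p 3 * mu {3*a-2<..<3*b-2}" by (simp only: pre_oo)
            moreover have "0 < mu {3*a-2<..<3*b-2}" using IH' ab h l by auto
            ultimately show ?thesis using p_pos[of 3] by simp
          qed
        qed
      qed
    qed
  qed
qed auto

lemma POS: "0 \<le> a \<Longrightarrow> a < b \<Longrightarrow> b \<le> 1 \<Longrightarrow> 0 < mu {a<..<b}"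
  using POS_aux[of "b - a"] by auto

lemma phiG_ex: "\<exists>c>0. \<forall>t. 0 < t \<longrightarrow> t \<le> 1 \<longrightarrow> c * G t \<le> mu {2*t/3<..<t}"
proof -
  define c where "c = min (min (mu {4/15<..<1/3}) (mu {11/30<..<2/5})) (min (mu {1/2<..<11/20}) (mu {2/3<..<3/4}))"
  have cpos: "c > 0" unfolding c_def using POS by auto
  have "t \<le> 1 \<longrightarrow> c * G t \<le> mu {2*t/3<..<t}" if t: "0 < t" for t
  proof (rule scale_induct[of "1/3" "\<lambda>t. t \<le> 1 \<longrightarrow> c * G t \<le> mu {2*t/3<..<t}", OF _ _ _ t])
    fix t :: real assume t1: "1/3 \<le> t"
    show "t \<le> 1 \<longrightarrow> c * G t \<le> mu {2*t/3<..<t}"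
    proof
      assume t2: "t \<le> 1"
      have "c * G t \<le> c" using cpos G_le1[of t] by (simp add: mult_left_le)
      also have "c \<le> mu {2*t/3<..<t}"
      proof -
        consider "t \<le> 2/5" | "2/5 \<le> t \<and> t \<le> 11/20" | "11/20 \<le> t \<and> t \<le> 3/4" | "3/4 \<le> t" by linarith
        then show ?thesis
        proof cases
          case 1
          have "mu {4/15<..<1/3} \<le> mu {2*t/3<..<t}" using 1 t1 by (intro finite_measure_mono) auto
          then show ?thesis unfolding c_def by linarith
        next
          case 2
          have "mu {11/30<..<2/5} \<le> mu {2*t/3<..<t}" using 2 t1 by (intro finite_measure_mono) auto
          then show ?thesis unfolding c_def by linarith
        next
          case 3
          have "mu {1/2<..<11/20} \<le> mu {2*t/3<..<t}" using 3 t1 by (intro finite_measure_mono) auto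
          then show ?thesis unfolding c_def by linarith
        next
          case 4
          have "mu {2/3<..<3/4} \<le> mu {2*t/3<..<t}" using 4 t2 by (intro finite_measure_mono) auto
          then show ?thesis unfolding c_def by linarith
        qed
      qed
      finally show "c * G t \<le> mu {2*t/3<..<t}" .
    qed
  next
    fix t :: real assume t: "0 < t" "t < 1/3"
      and IH: "\<And>s. 3*t \<le> s \<Longrightarrow> s \<le> 1 \<longrightarrow> c * G s \<le> mu {2 * s / 3<..<s}"
    have "mu {2*t/3<..<t} = p 0 * mu (Smap 0 -` {2*t/3<..<t})"
      using t by (intro KEY) (auto simp: I_def)
    also have "Smap 0 -` {2*t/3<..<t} = {2*(3*t)/3<..<3*t}" by (simp add: pre_oo)
    finally have e: "mu {2*t/3<..<t} = p 0 * mu {2*(3*t)/3<..<3*t}" .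
    have "G t = p 0 * G (3*t)" using G_scale[of "3*t"] t by simp
    then have "c * G t = p 0 * (c * G (3*t))" by simp
    also have "\<dots> \<le> p 0 * mu {2*(3*t)/3<..<3*t}"
      using IH[of "3*t"] t p_pos[of 0] by (intro mult_left_mono) auto
    finally show "t \<le> 1 \<longrightarrow> c * G t \<le> mu {2*t/3<..<t}" using e by simp
  qed simp
  then show ?thesis using cpos by blast
qed

lemma phiH_ex: "\<exists>c>0. \<forall>t. 0 < t \<longrightarrow> t \<le> 1 \<longrightarrow> c * H t \<le> mu {1-t<..<1-2*t/3}"
proof -
  define c where "c = min (min (mu {2/3<..<11/15}) (mu {3/5<..<19/30})) (min (mu {9/20<..<1/2}) (mu {1/4<..<1/3}))"
  have cpos: "c > 0" unfolding c_def using POS by auto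
  have "t \<le> 1 \<longrightarrow> c * H t \<le> mu {1-t<..<1-2*t/3}" if t: "0 < t" for t
  proof (rule scale_induct[of "1/3" "\<lambda>t. t \<le> 1 \<longrightarrow> c * H t \<le> mu {1-t<..<1-2*t/3}", OF _ _ _ t])
    fix t :: real assume t1: "1/3 \<le> t"
    show "t \<le> 1 \<longrightarrow> c * H t \<le> mu {1-t<..<1-2*t/3}"
    proof
      assume t2: "t \<le> 1"
      have "c * H t \<le> c" using cpos H_le1[of t] by (simp add: mult_left_le)
      also have "c \<le> mu {1-t<..<1-2*t/3}"
      proof -
        consider "t \<le> 2/5" | "2/5 \<le> t \<and> t \<le> 11/20" | "11/20 \<le> t \<and> t \<le> 3/4" | "3/4 \<le> t" by linarith
        then show ?thesis
        proof cases
          case 1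
          have "mu {2/3<..<11/15} \<le> mu {1-t<..<1-2*t/3}" using 1 t1 by (intro finite_measure_mono) auto
          then show ?thesis unfolding c_def by linarith
        next
          case 2
          have "mu {3/5<..<19/30} \<le> mu {1-t<..<1-2*t/3}" using 2 t1 by (intro finite_measure_mono) auto
          then show ?thesis unfolding c_def by linarith
        next
          case 3
          have "mu {9/20<..<1/2} \<le> mu {1-t<..<1-2*t/3}" using 3 t1 by (intro finite_measure_mono) auto
          then show ?thesis unfolding c_def by linarith
        next
          case 4
          have "mu {1/4<..<1/3} \<le> mu {1-t<..<1-2*t/3}" using 4 t2 by (intro finite_measure_mono) auto
          then show ?thesis unfolding c_def by linarith
        qed
      qed
      finally show "c * H t \<le> mu {1-t<..<1-2*t/3}" .
    qed
  next
    fix t :: real assume t: "0 < t" "t < 1/3"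
      and IH: "\<And>s. 3*t \<le> s \<Longrightarrow> s \<le> 1 \<longrightarrow> c * H s \<le> mu {1-s<..<1-2 * s / 3}"
    have "mu {1-t<..<1-2*t/3} = p 3 * mu (Smap 3 -` {1-t<..<1-2*t/3})"
      using t by (intro KEY) (auto simp: I_def)
    also have "Smap 3 -` {1-t<..<1-2*t/3} = {1-3*t<..<1-2*(3*t)/3}" by (auto simp: Smap_def field_simps)
    finally have e: "mu {1-t<..<1-2*t/3} = p 0 * mu {1-3*t<..<1-2*(3*t)/3}" by (simp add: p3)
    have "H t = p 0 * H (3*t)" using H_scale[of "3*t"] t by simp
    then have "c * H t = p 0 * (c * H (3*t))" by simp
    also have "\<dots> \<le> p 0 * mu {1-3*t<..<1-2*(3*t)/3}"
      using IH[of "3*t"] t p_pos[of 0] by (intro mult_left_mono) auto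
    finally show "t \<le> 1 \<longrightarrow> c * H t \<le> mu {1-t<..<1-2*t/3}" using e by simp
  qed simp
  then show ?thesis using cpos by blast
qed

definition cG where "cG = (SOME c. c > 0 \<and> (\<forall>t. 0 < t \<longrightarrow> t \<le> 1 \<longrightarrow> c * G t \<le> mu {2*t/3<..<t}))"
definition cH where "cH = (SOME c. c > 0 \<and> (\<forall>t. 0 < t \<longrightarrow> t \<le> 1 \<longrightarrow> c * H t \<le> mu {1-t<..<1-2*t/3}))"

lemma cG: "cG > 0" "\<And>t. 0 < t \<Longrightarrow> t \<le> 1 \<Longrightarrow> cG * G t \<le> mu {2*t/3<..<t}"
  using someI_ex[OF phiG_ex] unfolding cG_def by auto

lemma cH: "cH > 0" "\<And>t. 0 < t \<Longrightarrow> t \<le> 1 \<Longrightarrow> cH * H t \<le> mu {1-t<..<1-2*t/3}"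
  using someI_ex[OF phiH_ex] unfolding cH_def by auto

lemma LG: assumes "0 \<le> s" "s \<le> 2*l" "s + l \<le> 1" "0 < r" "r \<le> l"
  shows "cG * G r \<le> mu {s<..<s+l}"
proof -
  have "cG * G r \<le> cG * G (s+l)" using cG(1) assms by (intro mult_left_mono G_mono) auto
  also have "\<dots> \<le> mu {2*(s+l)/3<..<s+l}" using cG(2)[of "s+l"] assms by auto
  also have "\<dots> \<le> mu {s<..<s+l}" using assms by (intro finite_measure_mono) auto
  finally show ?thesis .
qed

lemma LH: assumes "0 \<le> s" "s \<le> 2*l" "s + l \<le> 1" "0 < r" "r \<le> l"
  shows "cH * H r \<le> mu {1-s-l<..<1-s}"
proof -
  have "cH * H r \<le> cH * H (s+l)" using cH(1) assms by (intro mult_left_mono H_mono) auto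
  also have "\<dots> \<le> mu {1-(s+l)<..<1-2*(s+l)/3}" using cH(2)[of "s+l"] assms by auto
  also have "\<dots> \<le> mu {1-s-l<..<1-s}" using assms by (intro finite_measure_mono) (auto simp: field_simps)
  finally show ?thesis .
qed

definition pm where "pm = min (p 0) (min (p 1) (p 2))"
definition cL where "cL = pm * min cG (cH * p 0)"

lemma pm_pos: "pm > 0" unfolding pm_def using p_pos by auto
lemma pm_le: "k < 4 \<Longrightarrow> pm \<le> p k"
proof -
  assume "k < 4"
  then have "k = 0 \<or> k = 1 \<or> k = 2 \<or> k = 3" by arith
  then show ?thesis unfolding pm_def using p3 by auto
qed

lemma cL_pos: "cL > 0" unfolding cL_def using pm_pos cG cH p_pos[of 0] by auto

lemma lowG: assumes "0 \<le> s" "s \<le> 2*l" "s + l \<le> 1" "0 < r" "r \<le> l" "k < 4"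
  shows "cL * G r \<le> p k * mu {s<..<s+l}"
proof -
  have Gn: "0 \<le> G r" unfolding G_def by simp
  have "pm * min cG (cH * p 0) \<le> p k * cG"
    using pm_le[OF assms(6)] pm_pos cG(1) cH(1) p_pos[of 0] p_pos[of k]
    by (intro mult_mono) auto
  then have "pm * min cG (cH * p 0) * G r \<le> p k * cG * G r"
    using Gn by (intro mult_right_mono) auto
  then have "cL * G r \<le> p k * (cG * G r)" unfolding cL_def by (simp add: mult.assoc)
  also have "\<dots> \<le> p k * mu {s<..<s+l}"
    using LG[OF assms(1-5)] p_pos[of k] by (intro mult_left_mono) auto
  finally show ?thesis .
qed

lemma lowH: assumes "0 \<le> s" "s \<le> 2*l" "s + l \<le> 1" "0 < r" "r \<le> l" "k < 4"
  shows "cL * G r \<le> p k * mu {1-s-l<..<1-s}"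
proof -
  have Gn: "0 \<le> G r" unfolding G_def by simp
  have "p 0 * G r \<le> H r" using GH[OF assms(4)] by simp
  then have "cH * (p 0 * G r) \<le> cH * H r" using cH(1) by (intro mult_left_mono) auto
  then have a: "(cH * p 0) * G r \<le> cH * H r" by (simp add: mult.assoc)
  have "pm * min cG (cH * p 0) \<le> p k * (cH * p 0)"
    using pm_le[OF assms(6)] pm_pos cG(1) cH(1) p_pos[of 0] p_pos[of k]
    by (intro mult_mono) auto
  then have "pm * min cG (cH * p 0) * G r \<le> p k * (cH * p 0) * G r"
    using Gn by (intro mult_right_mono) auto
  then have "cL * G r \<le> p k * ((cH * p 0) * G r)" unfolding cL_def by (simp add: mult.assoc)
  also have "\<dots> \<le> p k * (cH * H r)"
    using a p_pos[of k] by (intro mult_left_mono) auto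
  also have "\<dots> \<le> p k * mu {1-s-l<..<1-s}"
    using LH[OF assms(1-5)] p_pos[of k] by (intro mult_left_mono) auto
  finally show ?thesis .
qed

lemma Gb: assumes "0 < r" "s \<le> 27*r" "q \<le> 1" "0 \<le> q" shows "p 0^4 * (q * G s) \<le> G r"
proof -
  have a: "p 0^4 \<le> p 0^3" using p_pos[of 0] p_le1[of 0] by (intro power_decreasing) auto
  have b: "q * G s \<le> G s" using assms unfolding G_def by (intro mult_left_le_one_le) auto
  have "p 0^4 * (q * G s) \<le> p 0^3 * G s"
    using a b p_pos[of 0] assms by (intro mult_mono) (auto simp: G_def)
  also have "\<dots> \<le> G r" using G27 assms by simp
  finally show ?thesis .
qed

lemma Hb: assumes "0 < r" "s \<le> 27*r" "q \<le> 1" "0 \<le> q" shows "p 0^4 * (q * H s) \<le> G r"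
proof -
  have "p 0^4 * (q * H s) \<le> p 0^4 * H s"
    using assms p_pos[of 0] unfolding H_def
    by (intro mult_left_mono) (auto simp: mult_left_le_one_le)
  also have "\<dots> \<le> G r" using H27 assms by simp
  finally show ?thesis .
qed

lemma piece_lowG:
  assumes "A \<in> sets borel" "A \<inter> {0..1} \<subseteq> I k" "k < 4" "Smap k -` A = {s<..<s+l}" "A \<subseteq> ball x r"
    "0 \<le> s" "s \<le> 2*l" "s + l \<le> 1" "0 < r" "r \<le> l"
  shows "cL * G r \<le> mu (ball x r)"
proof -
  have "cL * G r \<le> p k * mu {s<..<s+l}" using lowG assms by simp
  also have "\<dots> = mu A" using KEY[OF assms(1-3)] assms(4) by simp
  also have "\<dots> \<le> mu (ball x r)" using assms(5) by (intro finite_measure_mono) auto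
  finally show ?thesis .
qed

lemma piece_lowH:
  assumes "A \<in> sets borel" "A \<inter> {0..1} \<subseteq> I k" "k < 4" "Smap k -` A = {1-s-l<..<1-s}" "A \<subseteq> ball x r"
    "0 \<le> s" "s \<le> 2*l" "s + l \<le> 1" "0 < r" "r \<le> l"
  shows "cL * G r \<le> mu (ball x r)"
proof -
  have "cL * G r \<le> p k * mu {1-s-l<..<1-s}" using lowH assms by simp
  also have "\<dots> = mu A" using KEY[OF assms(1-3)] assms(4) by simp
  also have "\<dots> \<le> mu (ball x r)" using assms(5) by (intro finite_measure_mono) auto
  finally show ?thesis .
qed

lemma lower:
  assumes j: "j \<in> {1/3,1/2,2/3}" and xj: "x - j < 2*r" "j - x < 2*r" and r: "0 < r" "r < 1/24"
  shows "cL * G r \<le> mu (ball x r)"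
proof -
  have sub1: "{x<..<x+r} \<subseteq> ball x r" by (auto simp: ball_eq_greaterThanLessThan)
  have sub2: "{x-r<..<x} \<subseteq> ball x r" by (auto simp: ball_eq_greaterThanLessThan)
  consider "j = 1/3" | "j = 1/2" | "j = 2/3" using j by auto
  then show ?thesis
  proof cases
    case 1
    show ?thesis
    proof (cases "x \<ge> j")
      case True
      show ?thesis
        by (rule piece_lowG[of "{x<..<x+r}" 1 "6*x-2" "6*r"])
           (use True 1 xj r sub1 in \<open>auto simp: I_def Smap_def field_simps\<close>)
    next
      case False
      show ?thesis
        by (rule piece_lowH[of "{x-r<..<x}" 0 "1-3*x" "3*r"])
           (use False 1 xj r sub2 in \<open>auto simp: I_def Smap_def field_simps\<close>)
    qed
  next
    case 2
    show ?thesis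
    proof (cases "x \<ge> j")
      case True
      show ?thesis
        by (rule piece_lowH[of "{x<..<x+r}" 2 "6*x-3" "6*r"])
           (use True 2 xj r sub1 in \<open>auto simp: I_def Smap_def field_simps\<close>)
    next
      case False
      show ?thesis
        by (rule piece_lowH[of "{x-r<..<x}" 1 "3-6*x" "6*r"])
           (use False 2 xj r sub2 in \<open>auto simp: I_def Smap_def field_simps\<close>)
    qed
  next
    case 3
    show ?thesis
    proof (cases "x \<ge> j")
      case True
      show ?thesis
        by (rule piece_lowG[of "{x<..<x+r}" 3 "3*x-2" "3*r"])
           (use True 3 xj r sub1 in \<open>auto simp: I_def Smap_def field_simps\<close>)
    next
      case False
      show ?thesis
        by (rule piece_lowG[of "{x-r<..<x}" 2 "4-6*x" "6*r"])
           (use False 3 xj r sub2 in \<open>auto simp: I_def Smap_def field_simps\<close>)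
    qed
  qed
qed

lemma upper:
  assumes j: "j \<in> {1/3,1/2,2/3}" and xj: "x - j < 2*r" "j - x < 2*r" and r: "0 < r" "r < 1/24"
  shows "p 0^4 * mu (ball x (2*r)) \<le> 2 * G r"
proof -
  have sub: "ball x (2*r) \<subseteq> {j-4*r..j} \<union> {j..j+4*r}"
    using xj by (auto simp: ball_eq_greaterThanLessThan)
  have "mu (ball x (2*r)) \<le> mu ({j-4*r..j} \<union> {j..j+4*r})"
    using sub by (intro finite_measure_mono) auto
  also have "\<dots> \<le> mu {j-4*r..j} + mu {j..j+4*r}" by (rule measure_Un_le) auto
  finally have m: "mu (ball x (2*r)) \<le> mu {j-4*r..j} + mu {j..j+4*r}" .
  have lr: "p 0^4 * mu {j-4*r..j} \<le> G r \<and> p 0^4 * mu {j..j+4*r} \<le> G r"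
  proof -
    consider "j = 1/3" | "j = 1/2" | "j = 2/3" using j by auto
    then show ?thesis
    proof cases
      case 1
      have a: "mu {1/3-4*r..1/3} = p 0 * H (3*(4*r))" using L13[of "4*r"] r by simp
      have b: "mu {1/3..1/3+4*r} = p 1 * G (6*(4*r))" using J13[of "4*r"] r by simp
      show ?thesis unfolding 1 a b using Hb[of r "3*(4*r)" "p 0"] Gb[of r "6*(4*r)" "p 1"]
        r p_pos[of 0] p_pos[of 1] p_le1[of 0] p_le1[of 1] by auto
    next
      case 2
      have a: "mu {1/2-4*r..1/2} = p 1 * H (6*(4*r))" using L12[of "4*r"] r by simp
      have b: "mu {1/2..1/2+4*r} = p 2 * H (6*(4*r))" using J12[of "4*r"] r by simp
      show ?thesis unfolding 2 a b using Hb[of r "6*(4*r)" "p 1"] Hb[of r "6*(4*r)" "p 2"]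
        r p_pos[of 1] p_pos[of 2] p_le1[of 1] p_le1[of 2] by auto
    next
      case 3
      have a: "mu {2/3-4*r..2/3} = p 2 * G (6*(4*r))" using L23[of "4*r"] r by simp
      have b: "mu {2/3..2/3+4*r} = p 0 * G (3*(4*r))" using J23[of "4*r"] r by simp
      show ?thesis unfolding 3 a b using Gb[of r "6*(4*r)" "p 2"] Gb[of r "3*(4*r)" "p 0"]
        r p_pos[of 0] p_pos[of 2] p_le1[of 0] p_le1[of 2] by auto
    qed
  qed
  have "p 0^4 * mu (ball x (2*r)) \<le> p 0^4 * (mu {j-4*r..j} + mu {j..j+4*r})"
    using m p_pos[of 0] by (intro mult_left_mono) auto
  also have "\<dots> \<le> 2 * G r" using lr by (simp add: distrib_left)
  finally show ?thesis .
qed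

lemma pre_ball:
  "Smap 0 -` ball x R = ball (3*x) (3*R)"
  "Smap 1 -` ball x R = ball (6*x-2) (6*R)"
  "Smap 2 -` ball x R = ball (4-6*x) (6*R)"
  "Smap 3 -` ball x R = ball (3*x-2) (3*R)"
  "Smap (Suc 0) -` ball x R = ball (6*x-2) (6*R)"
  by (auto simp: Smap_def ball_eq_greaterThanLessThan field_simps)

lemma case2:
  assumes "i < 4" "ball x (2*r) \<inter> {0..1} \<subseteq> I i" "0 < r"
    "Smap i -` ball x (2*r) = ball y (2*r')" "Smap i -` ball x r = ball y r'"
    "mu (ball y (2*r')) \<le> C * mu (ball y r')"
  shows "mu (ball x (2*r)) \<le> C * mu (ball x r)"
proof -
  have s2: "ball x r \<inter> {0..1} \<subseteq> I i" using assms(2,3) by (auto simp: ball_eq_greaterThanLessThan)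
  have "mu (ball x (2*r)) = p i * mu (ball y (2*r'))" using KEY[OF _ assms(2,1)] assms(4) by simp
  also have "\<dots> \<le> p i * (C * mu (ball y r'))" using assms(6) p_pos[of i] by (intro mult_left_mono) auto
  also have "\<dots> = C * (p i * mu (ball y r'))" by simp
  also have "p i * mu (ball y r') = mu (ball x r)" using KEY[OF _ s2 assms(1)] assms(5) by simp
  finally show ?thesis .
qed

lemma grid: "\<exists>c1>0. \<forall>x\<in>{0..1}. c1 \<le> mu (ball x (1/24))"
proof -
  define f where "f k = mu {real k/48<..<(real k+1)/48}" for k :: nat
  define c1 where "c1 = Min (f ` {..<48})"
  have fpos: "\<forall>y\<in>f ` {..<48}. 0 < y" unfolding f_def by (auto intro!: POS)
  have ne: "f ` {..<48} \<noteq> {}" by (metis empty_iff image_eqI lessThan_iff zero_less_numeral)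
  have c1pos: "c1 > 0" unfolding c1_def using fpos ne by (subst Min_gr_iff) auto
  have "c1 \<le> mu (ball x (1/24))" if x: "x \<in> {0..1}" for x
  proof -
    obtain k :: nat where k: "k < 48" "real k \<le> 48 * x" "48 * x \<le> real k + 1"
    proof (cases "x = 1")
      case True then show ?thesis using that[of 47] by simp
    next
      case False
      define k where "k = nat \<lfloor>48 * x\<rfloor>"
      have "0 \<le> 48 * x" "48 * x < 48" using x False by auto
      then have "real k = of_int \<lfloor>48 * x\<rfloor>" unfolding k_def by simp
      moreover have "of_int \<lfloor>48 * x\<rfloor> \<le> 48 * x" "48 * x < of_int \<lfloor>48 * x\<rfloor> + 1"
        by linarith+
      moreover have "\<lfloor>48 * x\<rfloor> < 48" using \<open>48 * x < 48\<close> by linarith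
      ultimately show ?thesis using that[of k] unfolding k_def by auto
    qed
    have "c1 \<le> f k" unfolding c1_def using k by (intro Min_le) auto
    also have "f k \<le> mu (ball x (1/24))" unfolding f_def
      using k by (intro finite_measure_mono) (auto simp: ball_eq_greaterThanLessThan field_simps)
    finally show ?thesis .
  qed
  then show ?thesis using c1pos by blast
qed

lemma doubling: "\<exists>C\<ge>1. \<forall>x\<in>{0..1}. \<forall>r>0. mu (ball x (2*r)) \<le> C * mu (ball x r)"
proof -
  obtain c1 where c1: "c1 > 0" "\<forall>x\<in>{0..1}. c1 \<le> mu (ball x (1/24))" using grid by blast
  define C where "C = max 1 (max (1/c1) (2 / (p 0^4 * cL)))"
  have C1: "C \<ge> 1" unfolding C_def by simp
  have Cc1: "1 \<le> C * c1"
  proof -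
    have "1 = (1/c1) * c1" using c1 by simp
    also have "\<dots> \<le> C * c1" unfolding C_def using c1 by (intro mult_right_mono) auto
    finally show ?thesis .
  qed
  have p04: "p 0^4 > 0" using p_pos[of 0] by simp
  have Cj: "2 / (p 0^4 * cL) \<le> C" unfolding C_def by simp
  have main: "\<forall>x\<in>{0..1}. mu (ball x (2*r)) \<le> C * mu (ball x r)" if r: "r > 0" for r
  proof (rule scale_induct[of "1/24" "\<lambda>r. \<forall>x\<in>{0..1}. mu (ball x (2*r)) \<le> C * mu (ball x r)", OF _ _ _ r])
    fix r :: real assume r: "1/24 \<le> r"
    show "\<forall>x\<in>{0..1}. mu (ball x (2*r)) \<le> C * mu (ball x r)"
    proof
      fix x :: real assume x: "x \<in> {0..1}"
      have "mu (ball x (2*r)) \<le> 1" by (rule mu_le1)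
      also have "\<dots> \<le> C * c1" by (rule Cc1)
      also have "\<dots> \<le> C * mu (ball x (1/24))" using c1 x C1 by (intro mult_left_mono) auto
      also have "\<dots> \<le> C * mu (ball x r)" using r C1
        by (intro mult_left_mono finite_measure_mono) (auto simp: ball_eq_greaterThanLessThan)
      finally show "mu (ball x (2*r)) \<le> C * mu (ball x r)" .
    qed
  next
    fix r :: real assume r: "0 < r" "r < 1/24"
      and IH: "\<And>s. 3 * r \<le> s \<Longrightarrow> \<forall>x\<in>{0..1}. mu (ball x (2 * s)) \<le> C * mu (ball x s)"
    show "\<forall>x\<in>{0..1}. mu (ball x (2*r)) \<le> C * mu (ball x r)"
    proof
      fix x :: real assume x: "x \<in> {0..1}"
      show "mu (ball x (2*r)) \<le> C * mu (ball x r)"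
      proof (cases "\<exists>j\<in>{1/3,1/2,2/3::real}. x - j < 2*r \<and> j - x < 2*r")
        case True
        then obtain j where j: "j \<in> {1/3,1/2,2/3::real}" "x - j < 2*r" "j - x < 2*r" by blast
        have U: "p 0^4 * mu (ball x (2*r)) \<le> 2 * G r" using upper[OF j r] .
        have L: "cL * G r \<le> mu (ball x r)" using lower[OF j r] .
        have "mu (ball x (2*r)) \<le> 2 * G r / p 0^4" using U p04 by (simp add: field_simps)
        also have "\<dots> = (2 / (p 0^4 * cL)) * (cL * G r)" using cL_pos p04 by (simp add: field_simps)
        also have "\<dots> \<le> C * mu (ball x r)"
          using Cj L cL_pos p04 G_pos[OF r(1)] C1 by (intro mult_mono) auto
        finally show ?thesis .
      next
        case False
        then have far: "\<not> (x - 1/3 < 2*r \<and> 1/3 - x < 2*r)" "\<not> (x - 1/2 < 2*r \<and> 1/2 - x < 2*r)"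
          "\<not> (x - 2/3 < 2*r \<and> 2/3 - x < 2*r)" by auto
        have IH3: "\<forall>x\<in>{0..1}. mu (ball x (2*(3*r))) \<le> C * mu (ball x (3*r))" using IH[of "3*r"] by simp
        have IH6: "\<forall>x\<in>{0..1}. mu (ball x (2*(6*r))) \<le> C * mu (ball x (6*r))" using IH[of "6*r"] r by simp
        consider "x \<le> 1/3" | "1/3 \<le> x \<and> x \<le> 1/2" | "1/2 \<le> x \<and> x \<le> 2/3" | "2/3 \<le> x" by linarith
        then show ?thesis
        proof cases
          case 1
          have b: "ball x (2*r) \<inter> {0..1} \<subseteq> I 0" using 1 far r
            by (auto simp: I_def ball_eq_greaterThanLessThan)
          show ?thesis
            by (rule case2[of 0 x r "3*x" "3*r"])
               (use b r x 1 IH3 in \<open>auto simp: pre_ball\<close>)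
        next
          case 2
          have b: "ball x (2*r) \<inter> {0..1} \<subseteq> I 1" using 2 far r
            by (auto simp: I_def ball_eq_greaterThanLessThan)
          show ?thesis
            by (rule case2[of 1 x r "6*x-2" "6*r"])
               (use b r x 2 IH6 in \<open>auto simp: pre_ball\<close>)
        next
          case 3
          have b: "ball x (2*r) \<inter> {0..1} \<subseteq> I 2" using 3 far r
            by (auto simp: I_def ball_eq_greaterThanLessThan)
          show ?thesis
            by (rule case2[of 2 x r "4-6*x" "6*r"])
               (use b r x 3 IH6 in \<open>auto simp: pre_ball\<close>)
        next
          case 4
          have b: "ball x (2*r) \<inter> {0..1} \<subseteq> I 3" using 4 far r
            by (auto simp: I_def ball_eq_greaterThanLessThan)
          show ?thesis
            by (rule case2[of 3 x r "3*x-2" "3*r"])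
               (use b r x 4 IH3 in \<open>auto simp: pre_ball\<close>)
        qed
      qed
    qed
  qed simp
  show ?thesis using main C1 by blast
qed

end

theorem lemma4p1:
  fixes lam :: real and M :: "real measure"
  assumes "lam > 1/6"
    and "is_mu_lambda lam M"
  shows "\<exists>C\<ge>1. \<forall>x\<in>{0..1}. \<forall>r>0.
           measure M (ball x (2*r)) \<le> C * measure M (ball x r)"
proof -
  interpret mu_setup lam M using assms by unfold_locales
  show ?thesis using doubling .
qed

end
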